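(* Let $n$ be even, $k\le n/2$, let ${\mathbf{H}}$ be chosen uniformly at random in $\mathbb{F}_3^{(n/2-k)\times n/2}$, and let $d\in\{1,\dots,k\}$. Set $R=k/(n/2)$, $\delta=d/(n/2)$, and $$\gamma=\min_{x>0}\Big((1-R+\delta)\log_3\frac{1+3x}{x}+(R-\delta)\log_3(1+x)\Big)-1+R.$$ Call a subset ${\mathcal E}\subseteq\{1,\dots,n/2\}$ of size $k-d$ good for ${\mathbf{H}}$ if the submatrix of ${\mathbf{H}}$ formed by the columns indexed by the complement of ${\mathcal E}$ has full rank $n/2-k$. Let ${\mathcal J}^{\mathrm{unif}}$ be uniformly distributed over the subsets of $\{1,\dots,n/2\}$ of size $k-d$ and ${\mathcal J}_{{\mathbf{H}}}$ uniformly distributed over those subsets of size $k-d$ that are good for ${\mathbf{H}}$. Then $$\mathbb{P}_{{\mathbf{H}}}\Big(\rho({\mathcal J}^{\mathrm{unif}},{\mathcal J}_{{\mathbf{H}}})>\frac{1}{3^d}\Big)\le\frac{2}{\binom{n/2}{k-d}}\big(3^d+2\cdot3^{2d+\gamma n/2}\big).$$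
   Context: $\rho$ denotes the statistical distance between two distributions on the same finite set: $\rho({\mathcal D}_0,{\mathcal D}_1)=\frac12\sum_x|{\mathcal D}_0(x)-{\mathcal D}_1(x)|$. *)

theory Defs
  imports "Jordan_Normal_Form.DL_Rank" "Jordan_Normal_Form.DL_Submatrix"
begin

definition stat_dist :: "'a set \<Rightarrow> ('a \<Rightarrow> real) \<Rightarrow> ('a \<Rightarrow> real) \<Rightarrow> real" where
  "stat_dist X P Q = (1/2) * (\<Sum>x\<in>X. \<bar>P x - Q x\<bar>)"

definition unif_mass :: "'a set \<Rightarrow> 'a \<Rightarrow> real" where
  "unif_mass A x = (if x \<in> A then 1 / real (card A) else 0)"

text \<open>Subsets of the column index set {0..<m} (0-based version of {1..m/2}) of size s.\<close>
definition subsets_of_size :: "nat \<Rightarrow> nat \<Rightarrow> nat set set" where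
  "subsets_of_size m s = {E. E \<subseteq> {0..<m} \<and> card E = s}"

definition good :: "'f::field mat \<Rightarrow> nat set \<Rightarrow> bool" where
  "good H E \<longleftrightarrow>
     vec_space.rank (dim_row H) (submatrix H UNIV ({0..<dim_col H} - E)) = dim_row H"

definition good_sets :: "'f::field mat \<Rightarrow> nat \<Rightarrow> nat set set" where
  "good_sets H s = {E \<in> subsets_of_size (dim_col H) s. good H E}"

text \<open>The exponent gamma (the minimum over x > 0 is read as an infimum).\<close>
definition gamma_exp :: "real \<Rightarrow> real \<Rightarrow> real" where
  "gamma_exp R \<delta> =
     (INF x\<in>{0<..}. (1 - R + \<delta>) * log 3 ((1 + 3*x) / x) + (R - \<delta>) * log 3 (1 + x)) - 1 + R"

end

theory Submission imports Defs begin

definition Vr :: "nat \<Rightarrow> (nat \<Rightarrow> 'f::field) set" where "Vr r = {c. \<forall>i\<ge>r. c i = 0}"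
definition dotp :: "nat \<Rightarrow> (nat \<Rightarrow> 'f::field) \<Rightarrow> (nat \<Rightarrow> 'f) \<Rightarrow> 'f" where
  "dotp r y c = (\<Sum>i<r. y i * c i)"
definition colf :: "nat \<Rightarrow> 'f::field mat \<Rightarrow> nat \<Rightarrow> nat \<Rightarrow> 'f" where
  "colf r H j = (\<lambda>i. if i < r then H $$ (i,j) else 0)"

lemma perp_exists:
  fixes W :: "(nat \<Rightarrow> 'f::field) set"
  assumes "W \<subseteq> Vr r" "(\<lambda>_. 0) \<in> W"
    "\<And>u v a. u\<in>W \<Longrightarrow> v\<in>W \<Longrightarrow> (\<lambda>i. u i + a * v i) \<in> W" "W \<noteq> Vr r"
  shows "\<exists>y\<in>Vr r. y \<noteq> (\<lambda>_. 0) \<and> (\<forall>w\<in>W. dotp r y w = 0)"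
  using assms
proof (induction r arbitrary: W)
  case 0
  have V0: "(Vr 0 :: (nat \<Rightarrow> 'f) set) = {(\<lambda>_. 0)}" by (auto simp: Vr_def)
  show ?case using 0(1,2,4) unfolding V0 by blast
next
  case (Suc r)
  show ?case
  proof (cases "\<forall>w\<in>W. w r = 0")
    case True
    define y :: "nat \<Rightarrow> 'f" where "y = (\<lambda>i. if i = r then 1 else 0)"
    have "y \<in> Vr (Suc r)" by (auto simp: y_def Vr_def)
    moreover have "y \<noteq> (\<lambda>_. 0)" by (metis y_def one_neq_zero)
    moreover have "dotp (Suc r) y w = 0" if "w \<in> W" for w
      using True that by (simp add: dotp_def y_def)
    ultimately show ?thesis by blast
  next
    case False
    then obtain w1 where w1: "w1 \<in> W" "w1 r \<noteq> 0" by auto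
    define w0 where "w0 = (\<lambda>i. 0 + (1 / w1 r) * w1 i)"
    have w0W: "w0 \<in> W" unfolding w0_def using Suc.prems(2,3) w1(1) by blast
    have w0r: "w0 r = 1" using w1 by (simp add: w0_def)
    define W' where "W' = {w\<in>W. w r = 0}"
    have W'sub: "W' \<subseteq> Vr r"
    proof
      fix w assume "w \<in> W'"
      then have "w \<in> Vr (Suc r)" "w r = 0" using Suc.prems(1) by (auto simp: W'_def)
      then show "w \<in> Vr r" by (auto simp: Vr_def) (metis Suc_leI le_neq_implies_less)
    qed
    have W'0: "(\<lambda>_. 0) \<in> W'" using Suc.prems(2) by (simp add: W'_def)
    have W'cl: "(\<lambda>i. u i + a * v i) \<in> W'" if "u\<in>W'" "v\<in>W'" for u v a
      using that Suc.prems(3) by (auto simp: W'_def)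
    have W'ne: "W' \<noteq> Vr r"
    proof
      assume eq: "W' = Vr r"
      have "Vr (Suc r) \<subseteq> W"
      proof
        fix v :: "nat \<Rightarrow> 'f" assume v: "v \<in> Vr (Suc r)"
        define u where "u = (\<lambda>i. v i + (- v r) * w0 i)"
        have "u \<in> Vr r"
        proof -
          have w0V: "w0 \<in> Vr (Suc r)" using w0W Suc.prems(1) by auto
          have "u i = 0" if "r \<le> i" for i
          proof (cases "i = r")
            case True then show ?thesis using w0r by (simp add: u_def)
          next
            case False then have "Suc r \<le> i" using that by simp
            then show ?thesis using v w0V by (simp add: u_def Vr_def)
          qed
          then show ?thesis by (simp add: Vr_def)
        qed
        then have uW: "u \<in> W" using eq W'_def by auto
        have "v = (\<lambda>i. u i + (v r) * w0 i)" by (auto simp: u_def algebra_simps)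
        then show "v \<in> W" using Suc.prems(3)[OF uW w0W] by metis
      qed
      then show False using Suc.prems(1,4) by auto
    qed
    obtain y' where y': "y' \<in> Vr r" "y' \<noteq> (\<lambda>_. 0)" "\<forall>w\<in>W'. dotp r y' w = 0"
      using Suc.IH[OF W'sub W'0 W'cl W'ne] by blast
    define y where "y = y'(r := - dotp r y' w0)"
    have "y \<in> Vr (Suc r)" using y'(1) by (auto simp: Vr_def y_def)
    moreover have "y \<noteq> (\<lambda>_. 0)"
    proof
      assume "y = (\<lambda>_. 0)"
      then have "y' i = 0" if "i \<noteq> r" for i using that by (metis fun_upd_other y_def)
      moreover have "y' r = 0" using y'(1) by (simp add: Vr_def)
      ultimately show False using y'(2) by (metis ext)
    qed
    moreover have "dotp (Suc r) y w = 0" if w: "w \<in> W" for w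
    proof -
      define u where "u = (\<lambda>i. w i + (- w r) * w0 i)"
      have uW: "u \<in> W" unfolding u_def by (rule Suc.prems(3)[OF w w0W])
      have "u r = 0" using w0r by (simp add: u_def)
      then have "u \<in> W'" using uW by (simp add: W'_def)
      then have "dotp r y' u = 0" using y' by blast
      moreover have "dotp r y' u = dotp r y' w - w r * dotp r y' w0"
        by (simp add: dotp_def u_def algebra_simps sum_distrib_left sum_subtractf)
      ultimately have e: "dotp r y' w = w r * dotp r y' w0" by simp
      have "dotp (Suc r) y w = dotp r y' w + y r * w r"
        by (simp add: dotp_def y_def)
      also have "\<dots> = 0" using e by (simp add: y_def algebra_simps)
      finally show ?thesis .
    qed
    ultimately show ?thesis by blast
  qed
qed

lemma not_good_perp:
  fixes H :: "'f::field mat"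
  assumes H: "H \<in> carrier_mat r m" and E: "E \<subseteq> {0..<m}" and ng: "\<not> good H E"
  shows "\<exists>y\<in>Vr r. y \<noteq> (\<lambda>_. 0) \<and> (\<forall>j\<in>{0..<m} - E. dotp r y (colf r H j) = 0)"
proof -
  define A where "A = {0..<m} - E"
  define M where "M = submatrix H UNIV A"
  have dr: "dim_row H = r" "dim_col H = m" using H by auto
  have Mr: "dim_row M = r" unfolding M_def dim_submatrix using dr by simp
  define t where "t = dim_col M"
  have Mc: "M \<in> carrier_mat r t" using Mr t_def by auto
  interpret vs: vec_space "TYPE('f)" r .
  have rk: "vs.rank M \<noteq> r" using ng unfolding good_def M_def A_def dr by simp
  have colsC: "set (cols M) \<subseteq> carrier_vec r" using Mc cols_dim by blast
  have sub: "submodule class_ring (vs.span (set (cols M))) vs.V"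
    using vs.span_is_submodule[OF colsC] by simp
  have spanC: "vs.span (set (cols M)) \<subseteq> carrier_vec r"
    using submodule.subset[OF sub] by simp
  have spanne: "vs.span (set (cols M)) \<noteq> carrier_vec r"
  proof
    assume eq: "vs.span (set (cols M)) = carrier_vec r"
    have "vs.rank M = vectorspace.dim class_ring (vs.V\<lparr>carrier := carrier_vec r\<rparr>)"
      unfolding vs.rank_def eq by simp
    also have "vs.V\<lparr>carrier := carrier_vec r\<rparr> = vs.V" by (simp add: module_vec_def)
    also have "vectorspace.dim class_ring vs.V = r" using vs.dim_is_n by simp
    finally show False using rk by simp
  qed
  define fv where "fv = (\<lambda>v :: 'f vec. \<lambda>i. if i < r then v $ i else 0)"
  define W where "W = fv ` vs.span (set (cols M))"
  have WV: "W \<subseteq> Vr r" by (auto simp: W_def fv_def Vr_def)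
  have z: "0\<^sub>v r \<in> vs.span (set (cols M))" using submodule.zero_closed[OF sub] by simp
  have W0: "(\<lambda>_. 0) \<in> W"
  proof -
    have "fv (0\<^sub>v r) = (\<lambda>_. 0)" by (auto simp: fv_def)
    then show ?thesis using z unfolding W_def by (metis image_eqI)
  qed
  have Wcl: "(\<lambda>i. u i + a * v i) \<in> W" if uW: "u \<in> W" and vW: "v \<in> W" for u v a
  proof -
    obtain u' v' where uv: "u' \<in> vs.span (set (cols M))" "v' \<in> vs.span (set (cols M))"
      "u = fv u'" "v = fv v'" using uW vW unfolding W_def by blast
    have "a \<cdot>\<^sub>v v' \<in> vs.span (set (cols M))"
      using submodule.smult_closed[OF sub, of a v'] uv(2) by simp
    then have s: "u' + a \<cdot>\<^sub>v v' \<in> vs.span (set (cols M))"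
      using submodule.m_closed[OF sub, of u' "a \<cdot>\<^sub>v v'"] uv(1) by simp
    have d: "u' \<in> carrier_vec r" "v' \<in> carrier_vec r" using uv spanC by auto
    have "fv (u' + a \<cdot>\<^sub>v v') = (\<lambda>i. u i + a * v i)"
      using d by (auto simp: fv_def uv)
    then show ?thesis using s unfolding W_def by (metis image_eqI)
  qed
  have Wne: "W \<noteq> Vr r"
  proof
    assume eq: "W = Vr r"
    obtain v where v: "v \<in> carrier_vec r" "v \<notin> vs.span (set (cols M))" using spanne spanC by auto
    have "fv v \<in> Vr r" by (auto simp: fv_def Vr_def)
    then obtain w where w: "w \<in> vs.span (set (cols M))" "fv v = fv w" using eq W_def by auto
    have "w \<in> carrier_vec r" using w spanC by auto
    have "v = w"
    proof (rule eq_vecI)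
      show "dim_vec v = dim_vec w" using v \<open>w \<in> carrier_vec r\<close> by simp
      fix i assume "i < dim_vec w"
      then have "i < r" using \<open>w \<in> carrier_vec r\<close> by simp
      then show "v $ i = w $ i" using fun_cong[OF w(2), of i] by (simp add: fv_def)
    qed
    then show False using v w by simp
  qed
  obtain y where y: "y \<in> Vr r" "y \<noteq> (\<lambda>_. 0)" "\<forall>w\<in>W. dotp r y w = 0"
    using perp_exists[OF WV W0 Wcl Wne] by blast
  have "dotp r y (colf r H j) = 0" if j: "j \<in> A" for j
  proof -
    define l where "l = card {a\<in>A. a < j}"
    have jm: "j < m" using j A_def by auto
    have "{a\<in>A. a < j} \<subset> {j. j < dim_col H \<and> j \<in> A}" using j jm dr by auto
    then have lt: "l < t" unfolding l_def t_def M_def dim_submatrix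
      by (simp add: psubset_card_mono)
    have "col M l \<in> set (cols M)" using lt Mc by (simp add: cols_def)
    then have "col M l \<in> vs.span (set (cols M))" using vs.in_own_span[OF colsC] by auto
    then have "fv (col M l) \<in> W" unfolding W_def by auto
    moreover have "fv (col M l) = colf r H j"
    proof
      fix i show "fv (col M l) i = colf r H j i"
      proof (cases "i < r")
        case True
        have "M $$ (i, l) = H $$ (i, j)"
          unfolding M_def l_def using submatrix_index_card[of i H j UNIV A] True jm dr j by simp
        then show ?thesis using True lt Mc by (simp add: fv_def colf_def)
      qed (simp add: fv_def colf_def)
    qed
    ultimately show ?thesis using y(3) by metis
  qed
  then show ?thesis using y A_def by blast
qed

lemma dotp_lin: "dotp r z (\<lambda>p. u p + b * v p) = dotp r z u + b * dotp r z v"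
  by (simp add: dotp_def algebra_simps sum.distrib sum_distrib_left)

lemma dotp_e: "dotp r z (\<lambda>p. if p = l then 1 else 0) = (if l < r then z l else 0)"
  by (simp add: dotp_def if_distrib cong: if_cong)

lemma dotp_scal: "dotp r z (\<lambda>p. b * v p) = b * dotp r z v"
  by (simp add: dotp_def algebra_simps sum_distrib_left)

lemma Vr_cl: "u \<in> Vr r \<Longrightarrow> v \<in> Vr r \<Longrightarrow> (\<lambda>i. u i + a * v i) \<in> Vr r"
  by (simp add: Vr_def)

lemma card_Vr:
  shows "finite (Vr r :: (nat \<Rightarrow> 'f::{field,finite}) set)"
    "card (Vr r :: (nat \<Rightarrow> 'f::{field,finite}) set) = card (UNIV :: 'f set) ^ r"
proof -
  define f :: "(nat \<Rightarrow> 'f) \<Rightarrow> (nat \<Rightarrow> 'f)" where "f = (\<lambda>c. restrict c {0..<r})"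
  define g :: "(nat \<Rightarrow> 'f) \<Rightarrow> (nat \<Rightarrow> 'f)" where "g = (\<lambda>c i. if i < r then c i else 0)"
  have b: "bij_betw f (Vr r) (PiE {0..<r} (\<lambda>_. UNIV))"
  proof (rule bij_betwI[where g = g])
    show "f \<in> Vr r \<rightarrow> PiE {0..<r} (\<lambda>_. UNIV)" by (auto simp: f_def)
    show "g \<in> PiE {0..<r} (\<lambda>_. UNIV) \<rightarrow> Vr r" by (auto simp: g_def Vr_def)
    show "g (f x) = x" if "x \<in> Vr r" for x
      using that by (auto simp: f_def g_def Vr_def)
    show "f (g y) = y" if "y \<in> PiE {0..<r} (\<lambda>_. UNIV)" for y
    proof
      fix i show "f (g y) i = y i"
        using that by (cases "i < r") (auto simp: f_def g_def PiE_def extensional_def)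
    qed
  qed
  have fin: "finite (PiE {0..<r} (\<lambda>_. UNIV :: 'f set))" by (simp add: finite_PiE)
  show "finite (Vr r :: (nat \<Rightarrow> 'f) set)" using bij_betw_finite[OF b] fin by simp
  show "card (Vr r :: (nat \<Rightarrow> 'f) set) = card (UNIV :: 'f set) ^ r"
    using bij_betw_same_card[OF b] by (simp add: card_PiE)
qed

lemma fiber_count:
  fixes K :: "(nat \<Rightarrow> 'f::{field,finite}) set" and f :: "(nat \<Rightarrow> 'f) \<Rightarrow> 'f"
  assumes fin: "finite K"
    and cl: "\<And>u v a. u\<in>K \<Longrightarrow> v\<in>K \<Longrightarrow> (\<lambda>i. u i + a * v i) \<in> K"
    and lin: "\<And>u v a. u\<in>K \<Longrightarrow> v\<in>K \<Longrightarrow> f (\<lambda>i. u i + a * v i) = f u + a * f v"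
    and c0: "c0 \<in> K" "f c0 = 1"
  shows "card K = card {c\<in>K. f c = 0} * card (UNIV::'f set)"
proof -
  define h where "h = (\<lambda>(c, a::'f). (\<lambda>i. c i + a * c0 i))"
  have inj: "inj_on h ({c\<in>K. f c = 0} \<times> UNIV)"
  proof (rule inj_onI)
    fix x y assume x: "x \<in> {c\<in>K. f c = 0} \<times> UNIV" and y: "y \<in> {c\<in>K. f c = 0} \<times> UNIV"
      and e: "h x = h y"
    obtain c1 a1 c2 a2 where xy: "x = (c1, a1)" "y = (c2, a2)" by force
    have c: "c1 \<in> K" "f c1 = 0" "c2 \<in> K" "f c2 = 0" using x y xy by auto
    have e': "(\<lambda>i. c1 i + a1 * c0 i) = (\<lambda>i. c2 i + a2 * c0 i)" using e xy h_def by simp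
    have "f (\<lambda>i. c1 i + a1 * c0 i) = f (\<lambda>i. c2 i + a2 * c0 i)" using e' by simp
    then have "a1 = a2" using lin[OF c(1) c0(1)] lin[OF c(3) c0(1)] c c0 by simp
    moreover then have "c1 = c2" using e' by (metis add_right_cancel ext)
    ultimately show "x = y" using xy by simp
  qed
  have img: "h ` ({c\<in>K. f c = 0} \<times> UNIV) = K"
  proof
    show "h ` ({c\<in>K. f c = 0} \<times> UNIV) \<subseteq> K" using cl c0 by (auto simp: h_def)
    show "K \<subseteq> h ` ({c\<in>K. f c = 0} \<times> UNIV)"
    proof
      fix u assume u: "u \<in> K"
      define c where "c = (\<lambda>i. u i + (- f u) * c0 i)"
      have cK: "c \<in> K" unfolding c_def by (rule cl[OF u c0(1)])
      have "f c = f u + (- f u) * f c0" unfolding c_def by (rule lin[OF u c0(1)])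
      then have "f c = 0" using c0 by simp
      moreover have "h (c, f u) = u" by (auto simp: h_def c_def)
      ultimately show "u \<in> h ` ({c\<in>K. f c = 0} \<times> UNIV)" using cK by (metis (mono_tags, lifting) SigmaI UNIV_I image_eqI mem_Collect_eq)
    qed
  qed
  have "card K = card ({c\<in>K. f c = 0} \<times> (UNIV::'f set))" using card_image[OF inj] img by simp
  then show ?thesis by (simp add: card_cartesian_product)
qed

lemma nonzero_idx:
  assumes "y \<in> Vr r" "y \<noteq> (\<lambda>_. 0)"
  obtains i where "i < r" "y i \<noteq> 0"
proof -
  obtain i where "y i \<noteq> 0" using assms(2) by auto
  moreover then have "i < r" using assms(1) by (auto simp: Vr_def) (meson not_le)
  ultimately show ?thesis using that by blast
qed

lemma card_ker1:
  fixes y :: "nat \<Rightarrow> 'f::{field,finite}"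
  assumes y: "y \<in> Vr r" "y \<noteq> (\<lambda>_. 0)"
  shows "real (card {c\<in>Vr r. dotp r y c = 0}) = real (card (UNIV::'f set)) ^ r / real (card (UNIV::'f set))"
proof -
  obtain i where i: "i < r" "y i \<noteq> 0" using nonzero_idx[OF y] .
  define c0 :: "nat \<Rightarrow> 'f" where "c0 = (\<lambda>p. (1 / y i) * (if p = i then 1 else 0))"
  have c0V: "c0 \<in> Vr r" using i by (auto simp: c0_def Vr_def)
  have d1: "dotp r y c0 = 1" unfolding c0_def dotp_scal dotp_e using i by simp
  have "card (Vr r :: (nat \<Rightarrow> 'f) set) = card {c\<in>Vr r. dotp r y c = 0} * card (UNIV::'f set)"
    by (rule fiber_count[of "Vr r" "dotp r y" c0]) (simp_all add: card_Vr(1) Vr_cl dotp_lin c0V d1)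
  then have "real (card (UNIV::'f set)) ^ r = real (card {c\<in>Vr r. dotp r y c = 0}) * real (card (UNIV::'f set))"
    using card_Vr(2)[where 'f='f] by (metis of_nat_mult of_nat_power)
  moreover have "real (card (UNIV::'f set)) > 0" by (simp add: card_gt_0_iff)
  ultimately show ?thesis by (simp add: field_simps)
qed

lemma card_ker2:
  fixes y y' :: "nat \<Rightarrow> 'f::{field,finite}"
  assumes y: "y \<in> Vr r" "y \<noteq> (\<lambda>_. 0)" and y': "y' \<in> Vr r" and ind: "\<forall>a. y' \<noteq> (\<lambda>l. a * y l)"
  shows "real (card {c\<in>Vr r. dotp r y c = 0 \<and> dotp r y' c = 0})
     = real (card (UNIV::'f set)) ^ r / real (card (UNIV::'f set)) / real (card (UNIV::'f set))"
proof -
  obtain i where i: "i < r" "y i \<noteq> 0" using nonzero_idx[OF y] .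
  define K where "K = {c\<in>Vr r. dotp r y c = 0}"
  have finK: "finite K" unfolding K_def by (rule finite_subset[OF _ card_Vr(1)]) auto
  have Kcl: "(\<lambda>i. u i + a * v i) \<in> K" if "u \<in> K" "v \<in> K" for u v a
    using that by (auto simp: K_def dotp_lin Vr_cl)
  have "\<exists>c1\<in>K. dotp r y' c1 \<noteq> 0"
  proof (rule ccontr)
    assume "\<not> ?thesis"
    then have all: "\<forall>c\<in>K. dotp r y' c = 0" by blast
    define a where "a = y' i / y i"
    have "y' = (\<lambda>l. a * y l)"
    proof
      fix l show "y' l = a * y l"
      proof (cases "l < r")
        case False then show ?thesis using y y' by (simp add: Vr_def)
      next
        case True
        show ?thesis
        proof (cases "l = i")
          case True then show ?thesis using i by (simp add: a_def)
        next
          case False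
          define c where "c = (\<lambda>p. (if p = l then 1 else 0) + (- (y l / y i)) * (if p = i then (1::'f) else 0))"
          have cV: "c \<in> Vr r" using \<open>l < r\<close> i False by (auto simp: c_def Vr_def)
          have "dotp r y c = y l + (- (y l / y i)) * y i"
            unfolding c_def dotp_lin dotp_e using \<open>l < r\<close> i by simp
          then have "dotp r y c = 0" using i by simp
          then have "c \<in> K" using cV K_def by simp
          then have "dotp r y' c = 0" using all by blast
          moreover have "dotp r y' c = y' l + (- (y l / y i)) * y' i"
            unfolding c_def dotp_lin dotp_e using \<open>l < r\<close> i by simp
          ultimately show ?thesis using i by (simp add: a_def field_simps)
        qed
      qed
    qed
    then show False using ind by blast
  qed
  then obtain c1 where c1: "c1 \<in> K" "dotp r y' c1 \<noteq> 0" by blast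
  define c0 where "c0 = (\<lambda>p. (1 / dotp r y' c1) * c1 p)"
  have c0K: "c0 \<in> K"
  proof -
    have "dotp r y c0 = (1 / dotp r y' c1) * dotp r y c1" unfolding c0_def by (rule dotp_scal)
    moreover have "c0 \<in> Vr r" using c1(1) by (auto simp: c0_def K_def Vr_def)
    ultimately show ?thesis using c1(1) by (simp add: K_def)
  qed
  have d1: "dotp r y' c0 = 1" using c1(2) unfolding c0_def dotp_scal by simp
  have "card K = card {c\<in>K. dotp r y' c = 0} * card (UNIV::'f set)"
    by (rule fiber_count[of K "dotp r y'" c0]) (simp_all add: finK Kcl dotp_lin c0K d1)
  moreover have "{c\<in>K. dotp r y' c = 0} = {c\<in>Vr r. dotp r y c = 0 \<and> dotp r y' c = 0}"
    by (auto simp: K_def)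
  ultimately have "real (card K) = real (card {c\<in>Vr r. dotp r y c = 0 \<and> dotp r y' c = 0}) * real (card (UNIV::'f set))"
    by (metis of_nat_mult)
  moreover have "real (card K) = real (card (UNIV::'f set)) ^ r / real (card (UNIV::'f set))"
    using card_ker1[OF y] K_def by simp
  moreover have "real (card (UNIV::'f set)) > 0" by (simp add: card_gt_0_iff)
  ultimately show ?thesis by (simp add: field_simps)
qed

lemma card_mat_cols:
  fixes P :: "nat \<Rightarrow> (nat \<Rightarrow> 'f::{field,finite}) \<Rightarrow> bool"
  shows "card {H \<in> carrier_mat r m. \<forall>j<m. P j (colf r H j)} = (\<Prod>j<m. card {c\<in>Vr r. P j c})"
    "finite {H \<in> carrier_mat r m. \<forall>j<m. P j (colf r H j)}"
proof -
  define S where "S = {H \<in> carrier_mat r m. \<forall>j<m. P j (colf r H j)}"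
  define T where "T = PiE {..<m} (\<lambda>j. {c\<in>Vr r. P j c})"
  define f where "f = (\<lambda>H::'f mat. \<lambda>j\<in>{..<m}. colf r H j)"
  have inj: "inj_on f S"
  proof (rule inj_onI)
    fix H1 H2 assume H: "H1 \<in> S" "H2 \<in> S" "f H1 = f H2"
    show "H1 = H2"
    proof (rule eq_matI)
      show "dim_row H1 = dim_row H2" "dim_col H1 = dim_col H2" using H by (auto simp: S_def)
      fix i j assume ij: "i < dim_row H2" "j < dim_col H2"
      then have "i < r" "j < m" using H by (auto simp: S_def)
      then show "H1 $$ (i, j) = H2 $$ (i, j)"
        using fun_cong[OF fun_cong[OF H(3), of j], of i] by (simp add: f_def colf_def)
    qed
  qed
  have img: "f ` S = T"
  proof
    show "f ` S \<subseteq> T" by (auto simp: f_def S_def T_def colf_def Vr_def)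
    show "T \<subseteq> f ` S"
    proof
      fix C assume C: "C \<in> T"
      define H where "H = mat r m (\<lambda>(i,j). C j i)"
      have cj: "colf r H j = C j" if "j < m" for j
      proof
        have Cj: "C j \<in> {c\<in>Vr r. P j c}" using C that unfolding T_def by (auto dest: PiE_mem)
        fix i show "colf r H j i = C j i"
          using Cj that by (cases "i < r") (auto simp: colf_def H_def Vr_def)
      qed
      have "H \<in> S" using C cj by (auto simp: S_def H_def T_def)
      moreover have "f H = C"
      proof
        fix j show "f H j = C j"
          using C cj by (cases "j < m") (auto simp: f_def T_def PiE_def extensional_def)
      qed
      ultimately show "C \<in> f ` S" by blast
    qed
  qed
  have finT: "finite T" unfolding T_def
    by (rule finite_PiE) (simp, rule finite_subset[OF _ card_Vr(1)], blast)
  show "card {H \<in> carrier_mat r m. \<forall>j<m. P j (colf r H j)} = (\<Prod>j<m. card {c\<in>Vr r. P j c})"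
    using card_image[OF inj] img unfolding S_def[symmetric] T_def by (simp add: card_PiE)
  show "finite {H \<in> carrier_mat r m. \<forall>j<m. P j (colf r H j)}"
    using finT img inj unfolding S_def[symmetric] by (metis finite_imageD)
qed



lemma prod_ind:
  fixes A :: "nat set"
  assumes "A \<subseteq> {..<m}"
  shows "(\<Prod>j<m. (if j \<in> A then (a::real) else 1)) = a ^ card A"
proof -
  have "(\<Prod>j<m. (if j \<in> A then (a::real) else 1)) = (\<Prod>j\<in>{..<m} \<inter> {j. j \<in> A}. a) * (\<Prod>j\<in>{..<m} \<inter> - {j. j \<in> A}. 1)"
    by (rule prod.If_cases) simp
  also have "{..<m} \<inter> {j. j \<in> A} = A" using assms by auto
  finally show ?thesis by simp
qed

lemma dotp_scal1: "dotp r (\<lambda>l. a * y l) c = a * dotp r y c"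
  by (simp add: dotp_def algebra_simps sum_distrib_left)

lemma count1:
  fixes y :: "nat \<Rightarrow> 'f::{field,finite}"
  assumes y: "y \<in> Vr r" "y \<noteq> (\<lambda>_. 0)" and A: "A \<subseteq> {..<m}"
  shows "real (card {H \<in> carrier_mat r m. \<forall>j\<in>A. dotp r y (colf r H j) = 0})
     = (real (card (UNIV::'f set)) ^ r) ^ m * (1 / real (card (UNIV::'f set))) ^ card A"
proof -
  let ?q = "real (card (UNIV::'f set))"
  have q0: "?q > 0" by (simp add: card_gt_0_iff)
  have "{H \<in> carrier_mat r m. \<forall>j\<in>A. dotp r y (colf r H j) = 0}
      = {H \<in> carrier_mat r m. \<forall>j<m. (\<lambda>j c. j \<in> A \<longrightarrow> dotp r y c = 0) j (colf r H j)}"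
    using A by auto
  then have "real (card {H \<in> carrier_mat r m. \<forall>j\<in>A. dotp r y (colf r H j) = 0})
      = (\<Prod>j<m. real (card {c\<in>Vr r. j \<in> A \<longrightarrow> dotp r y c = 0}))"
    using card_mat_cols(1)[of r m "\<lambda>j c. j \<in> A \<longrightarrow> dotp r y c = 0"] by simp
  also have "\<dots> = (\<Prod>j<m. ?q ^ r * (if j \<in> A then 1 / ?q else 1))"
  proof (rule prod.cong[OF refl])
    fix j
    show "real (card {c\<in>Vr r. j \<in> A \<longrightarrow> dotp r y c = 0}) = ?q ^ r * (if j \<in> A then 1 / ?q else 1)"
    proof (cases "j \<in> A")
      case True then show ?thesis using card_ker1[OF y] by simp
    next
      case False then show ?thesis using card_Vr(2)[where 'f='f, of r] by simp
    qed
  qed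
  also have "\<dots> = (?q ^ r) ^ m * (1 / ?q) ^ card A"
    by (simp add: prod.distrib prod_ind[OF A])
  finally show ?thesis .
qed

lemma count2:
  fixes y y' :: "nat \<Rightarrow> 'f::{field,finite}"
  assumes y: "y \<in> Vr r" "y \<noteq> (\<lambda>_. 0)" and y': "y' \<in> Vr r" and ind: "\<forall>a. y' \<noteq> (\<lambda>l. a * y l)"
    and A: "A \<subseteq> {..<m}" and B: "B \<subseteq> {..<m}"
  shows "real (card {H \<in> carrier_mat r m. (\<forall>j\<in>A. dotp r y (colf r H j) = 0) \<and> (\<forall>j\<in>B. dotp r y' (colf r H j) = 0)})
     = (real (card (UNIV::'f set)) ^ r) ^ m * (1 / real (card (UNIV::'f set))) ^ card A * (1 / real (card (UNIV::'f set))) ^ card B"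
proof -
  let ?q = "real (card (UNIV::'f set))"
  have q0: "?q > 0" by (simp add: card_gt_0_iff)
  have y'0: "y' \<noteq> (\<lambda>_. 0)" using ind[rule_format, of 0] by simp
  have "{H \<in> carrier_mat r m. (\<forall>j\<in>A. dotp r y (colf r H j) = 0) \<and> (\<forall>j\<in>B. dotp r y' (colf r H j) = 0)}
      = {H \<in> carrier_mat r m. \<forall>j<m. (\<lambda>j c. (j \<in> A \<longrightarrow> dotp r y c = 0) \<and> (j \<in> B \<longrightarrow> dotp r y' c = 0)) j (colf r H j)}"
    using A B by auto
  then have "real (card {H \<in> carrier_mat r m. (\<forall>j\<in>A. dotp r y (colf r H j) = 0) \<and> (\<forall>j\<in>B. dotp r y' (colf r H j) = 0)})
      = (\<Prod>j<m. real (card {c\<in>Vr r. (j \<in> A \<longrightarrow> dotp r y c = 0) \<and> (j \<in> B \<longrightarrow> dotp r y' c = 0)}))"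
    using card_mat_cols(1)[of r m "\<lambda>j c. (j \<in> A \<longrightarrow> dotp r y c = 0) \<and> (j \<in> B \<longrightarrow> dotp r y' c = 0)"] by simp
  also have "\<dots> = (\<Prod>j<m. ?q ^ r * ((if j \<in> A then 1 / ?q else 1) * (if j \<in> B then 1 / ?q else 1)))"
  proof (rule prod.cong[OF refl])
    fix j
    show "real (card {c\<in>Vr r. (j \<in> A \<longrightarrow> dotp r y c = 0) \<and> (j \<in> B \<longrightarrow> dotp r y' c = 0)})
       = ?q ^ r * ((if j \<in> A then 1 / ?q else 1) * (if j \<in> B then 1 / ?q else 1))"
    proof (cases "j \<in> A"; cases "j \<in> B")
      assume "j \<in> A" "j \<in> B" then show ?thesis using card_ker2[OF y y' ind] by simp
    next
      assume "j \<in> A" "j \<notin> B" then show ?thesis using card_ker1[OF y] by simp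
    next
      assume "j \<notin> A" "j \<in> B" then show ?thesis using card_ker1[OF y' y'0] by simp
    next
      assume "j \<notin> A" "j \<notin> B" then show ?thesis using card_Vr(2)[where 'f='f, of r] by simp
    qed
  qed
  also have "\<dots> = (?q ^ r) ^ m * (1 / ?q) ^ card A * (1 / ?q) ^ card B"
    by (simp add: prod.distrib prod_ind[OF A] prod_ind[OF B])
  finally show ?thesis .
qed

lemma count_dep:
  fixes y :: "nat \<Rightarrow> 'f::{field,finite}"
  assumes y: "y \<in> Vr r" "y \<noteq> (\<lambda>_. 0)" and a: "a \<noteq> 0"
    and A: "A \<subseteq> {..<m}" and B: "B \<subseteq> {..<m}"
  shows "real (card {H \<in> carrier_mat r m. (\<forall>j\<in>A. dotp r y (colf r H j) = 0) \<and> (\<forall>j\<in>B. dotp r (\<lambda>l. a * y l) (colf r H j) = 0)})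
     = (real (card (UNIV::'f set)) ^ r) ^ m * (1 / real (card (UNIV::'f set))) ^ card (A \<union> B)"
proof -
  have "{H \<in> carrier_mat r m. (\<forall>j\<in>A. dotp r y (colf r H j) = 0) \<and> (\<forall>j\<in>B. dotp r (\<lambda>l. a * y l) (colf r H j) = 0)}
     = {H \<in> carrier_mat r m. \<forall>j\<in>A \<union> B. dotp r y (colf r H j) = 0}"
    using a by (auto simp: dotp_scal1)
  then show ?thesis using count1[OF y, of "A \<union> B" m] A B by simp
qed

lemma gen_bound:
  fixes U A :: "nat set" and x :: real
  assumes U: "finite U" and AU: "A \<subseteq> U" and x: "x > 0"
  shows "(\<Sum>B\<in>{B. B \<subseteq> U \<and> card B = s}. 3 ^ card (A \<inter> (U - B)) * x ^ card (U - B))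
    \<le> (1 + 3 * x) ^ card A * (1 + x) ^ card (U - A)"
proof -
  define w where "w = (\<lambda>u. (if u \<in> A then 3 else 1) * x)"
  have pw: "(\<Prod>u\<in>U - B. w u) = 3 ^ card (A \<inter> (U - B)) * x ^ card (U - B)" if "B \<subseteq> U" for B
  proof -
    have "(\<Prod>u\<in>U - B. w u) = (\<Prod>u\<in>U - B. (if u \<in> A then 3 else 1)) * x ^ card (U - B)"
      by (simp add: w_def prod.distrib)
    also have "(\<Prod>u\<in>U - B. (if u \<in> A then (3::real) else 1)) = (\<Prod>u\<in>(U - B) \<inter> {u. u \<in> A}. 3) * (\<Prod>u\<in>(U - B) \<inter> - {u. u \<in> A}. 1)"
      by (rule prod.If_cases) (simp add: U)
    also have "\<dots> = 3 ^ card (A \<inter> (U - B))" by (simp add: Int_commute)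
    finally show ?thesis .
  qed
  have "(\<Prod>u\<in>U. 1 + w u) = (\<Sum>X\<in>Pow U. (\<Prod>u\<in>X. 1) * (\<Prod>u\<in>U - X. w u))"
    by (rule prod_add[OF U])
  also have "\<dots> = (\<Sum>X\<in>Pow U. 3 ^ card (A \<inter> (U - X)) * x ^ card (U - X))"
    by (rule sum.cong[OF refl]) (simp add: pw)
  finally have e1: "(\<Prod>u\<in>U. 1 + w u) = (\<Sum>X\<in>Pow U. 3 ^ card (A \<inter> (U - X)) * x ^ card (U - X))" .
  have "(\<Prod>u\<in>U. 1 + w u) = (\<Prod>u\<in>U. if u \<in> A then 1 + 3 * x else 1 + x)"
    by (rule prod.cong) (auto simp: w_def)
  also have "\<dots> = (\<Prod>u\<in>U \<inter> {u. u \<in> A}. 1 + 3 * x) * (\<Prod>u\<in>U \<inter> - {u. u \<in> A}. 1 + x)"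
    by (rule prod.If_cases[OF U])
  also have "U \<inter> {u. u \<in> A} = A" using AU by auto
  also have "U \<inter> - {u. u \<in> A} = U - A" by auto
  finally have e2: "(\<Prod>u\<in>U. 1 + w u) = (1 + 3 * x) ^ card A * (1 + x) ^ card (U - A)" by simp
  have "(\<Sum>B\<in>{B. B \<subseteq> U \<and> card B = s}. 3 ^ card (A \<inter> (U - B)) * x ^ card (U - B))
     \<le> (\<Sum>X\<in>Pow U. 3 ^ card (A \<inter> (U - X)) * x ^ card (U - X))"
    by (rule sum_mono2) (use U x in auto)
  then show ?thesis using e1 e2 by simp
qed

lemma dist_le:
  assumes fin: "finite S" and GS: "G \<subseteq> S" and ne: "S \<noteq> {}"
  shows "stat_dist S (unif_mass S) (unif_mass G) \<le> real (card (S - G)) / real (card S)"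
proof -
  have cS: "card S > 0" using fin ne by (simp add: card_gt_0_iff)
  have finG: "finite G" using fin GS finite_subset by blast
  show ?thesis
  proof (cases "G = {}")
    case True
    have "stat_dist S (unif_mass S) (unif_mass G) = 1/2 * (\<Sum>x\<in>S. 1 / real (card S))"
      unfolding stat_dist_def unif_mass_def using True by (simp cong: sum.cong)
    also have "\<dots> = 1/2" using cS by simp
    also have "\<dots> \<le> real (card (S - G)) / real (card S)" using True cS by simp
    finally show ?thesis .
  next
    case False
    have cG: "card G > 0" using finG False by (simp add: card_gt_0_iff)
    have le: "card G \<le> card S" using card_mono[OF fin GS] .
    have "(\<Sum>x\<in>S. \<bar>unif_mass S x - unif_mass G x\<bar>)
       = (\<Sum>x\<in>S - G. \<bar>unif_mass S x - unif_mass G x\<bar>) + (\<Sum>x\<in>G. \<bar>unif_mass S x - unif_mass G x\<bar>)"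
      by (rule sum.subset_diff[OF GS fin])
    also have "(\<Sum>x\<in>S - G. \<bar>unif_mass S x - unif_mass G x\<bar>) = (\<Sum>x\<in>S - G. 1 / real (card S))"
      by (rule sum.cong) (auto simp: unif_mass_def)
    also have "(\<Sum>x\<in>G. \<bar>unif_mass S x - unif_mass G x\<bar>) = (\<Sum>x\<in>G. 1 / real (card G) - 1 / real (card S))"
    proof (rule sum.cong[OF refl])
      fix x assume "x \<in> G"
      moreover have "1 / real (card S) \<le> 1 / real (card G)"
        using cG le by (simp add: frac_le)
      ultimately show "\<bar>unif_mass S x - unif_mass G x\<bar> = 1 / real (card G) - 1 / real (card S)"
        using GS by (auto simp: unif_mass_def)
    qed
    also have "(\<Sum>x\<in>S - G. 1 / real (card S)) = real (card (S - G)) / real (card S)" by simp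
    also have "(\<Sum>x\<in>G. 1 / real (card G) - 1 / real (card S)) = 1 - real (card G) / real (card S)"
      using cG by (simp add: field_simps)
    also have "1 - real (card G) / real (card S) = real (card (S - G)) / real (card S)"
    proof -
      have "real (card (S - G)) = real (card S) - real (card G)"
        using card_Diff_subset[OF finG GS] le by simp
      then show ?thesis using cS by (simp add: field_simps)
    qed
    finally have "(\<Sum>x\<in>S. \<bar>unif_mass S x - unif_mass G x\<bar>) = 2 * (real (card (S - G)) / real (card S))"
      by simp
    then show ?thesis unfolding stat_dist_def by simp
  qed
qed



lemma sum_indicator_card:
  assumes "finite X"
  shows "(\<Sum>x\<in>X. if P x then 1 else (0::real)) = real (card {x\<in>X. P x})"
  using assms by (simp add: sum.inter_filter[symmetric])

lemma swap4:
  "(\<Sum>h\<in>H. \<Sum>a\<in>A. \<Sum>b\<in>B. \<Sum>c\<in>C. \<Sum>d\<in>D. f h a b c d)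
   = (\<Sum>a\<in>A. \<Sum>b\<in>B. \<Sum>c\<in>C. \<Sum>d\<in>D. \<Sum>h\<in>H. (f h a b c d :: real))"
proof -
  have "(\<Sum>h\<in>H. \<Sum>a\<in>A. \<Sum>b\<in>B. \<Sum>c\<in>C. \<Sum>d\<in>D. f h a b c d)
      = (\<Sum>a\<in>A. \<Sum>h\<in>H. \<Sum>b\<in>B. \<Sum>c\<in>C. \<Sum>d\<in>D. f h a b c d)" by (rule sum.swap)
  also have "\<dots> = (\<Sum>a\<in>A. \<Sum>b\<in>B. \<Sum>h\<in>H. \<Sum>c\<in>C. \<Sum>d\<in>D. f h a b c d)"
    by (rule sum.cong[OF refl], rule sum.swap)
  also have "\<dots> = (\<Sum>a\<in>A. \<Sum>b\<in>B. \<Sum>c\<in>C. \<Sum>h\<in>H. \<Sum>d\<in>D. f h a b c d)"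
    by (rule sum.cong[OF refl], rule sum.cong[OF refl], rule sum.swap)
  also have "\<dots> = (\<Sum>a\<in>A. \<Sum>b\<in>B. \<Sum>c\<in>C. \<Sum>d\<in>D. \<Sum>h\<in>H. f h a b c d)"
    by (rule sum.cong[OF refl], rule sum.cong[OF refl], rule sum.cong[OF refl], rule sum.swap)
  finally show ?thesis .
qed

lemma powr_tlog:
  assumes "z > 0"
  shows "3 powr (real t * log 3 z) = z ^ t"
proof -
  have "3 powr (real t * log 3 z) = (3 powr (log 3 z)) powr real t"
    by (simp add: powr_powr mult.commute)
  also have "\<dots> = z powr real t" using assms by simp
  also have "\<dots> = z ^ t" using assms by (simp add: powr_realpow)
  finally show ?thesis .
qed

lemma alg1:
  assumes "real N > 0" "D > 0"
  shows "2 * X * real N * Z * g / (real N / D)^2 = 2 * g * (X * Z * D^2) / real N"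
  using assms by (simp add: field_simps power2_eq_square)

theorem lemma7:
  fixes n k d :: nat
  assumes F3: "card (UNIV :: 'f set) = 3"
    and even_n: "even n"
    and k_le: "k \<le> n div 2"
    and d_range: "1 \<le> d" "d \<le> k"
  shows
    "(let m = n div 2;
          R = real k / real m;
          \<delta> = real d / real m;
          \<gamma> = gamma_exp R \<delta>;
          Hs = (carrier_mat (m - k) m :: ('f::{field,finite}) mat set);
          bad = {H \<in> Hs. stat_dist (subsets_of_size m (k - d))
                           (unif_mass (subsets_of_size m (k - d)))
                           (unif_mass (good_sets H (k - d))) > 1 / 3 ^ d}
      in real (card bad) / real (card Hs)
           \<le> 2 / real (m choose (k - d)) * (3 ^ d + 2 * 3 powr (2 * real d + \<gamma> * real n / 2)))"
proof -
  define m where "m = n div 2"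
  define r where "r = m - k"
  define s where "s = k - d"
  define t where "t = m - s"
  have km: "k \<le> m" using k_le m_def by simp
  have t_eq: "t = r + d" using km d_range unfolding t_def r_def s_def by simp
  have sm: "s \<le> m" using km unfolding s_def by simp
  have m0: "m > 0" using km d_range by simp
  have cF: "real (card (UNIV::'f set)) = 3" using F3 by simp
  define S where "S = subsets_of_size m s"
  have S_eq: "S = {B. B \<subseteq> {..<m} \<and> card B = s}"
    by (simp add: S_def subsets_of_size_def atLeast0LessThan)
  have finS: "finite S"
    by (rule finite_subset[of _ "Pow {..<m}"]) (auto simp: S_eq)
  define N where "N = card S"
  have N_eq: "N = m choose s"
  proof -
    have "card {B. B \<subseteq> {..<m} \<and> card B = s} = card {..<m::nat} choose s" by (rule n_subsets) simp
    then show ?thesis unfolding N_def S_eq by simp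
  qed
  have Npos: "N > 0" using N_eq sm by simp
  have Sne: "S \<noteq> {}" using Npos N_def by auto
  define Hs where "Hs = (carrier_mat r m :: 'f mat set)"
  define Y where "Y = (Vr r :: (nat \<Rightarrow> 'f) set) - {(\<lambda>_. 0)}"
  define A where "A = (\<lambda>E. {..<m} - E)"
  define orth where "orth = (\<lambda>H E y. \<forall>j\<in>A E. dotp r y (colf r (H::'f mat) j) = 0)"
  define ind where "ind = (\<lambda>H E y. if orth H E y then 1 else (0::real))"
  define W where "W = (\<lambda>H. \<Sum>E\<in>S. \<Sum>y\<in>Y. ind H E y)"
  define Q where "Q = ((3::real) ^ r) ^ m"
  define \<mu> where "\<mu> = real N * (3 ^ r - 1) * (1/3::real) ^ t"
  define V where "V = 2 * (3 ^ r - 1) * (\<Sum>E\<in>S. \<Sum>E'\<in>S. (1/3::real) ^ card (A E \<union> A E'))"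
  define bad where "bad = {H \<in> Hs. stat_dist S (unif_mass S) (unif_mass (good_sets H s)) > 1 / 3 ^ d}"
  have Qpos: "Q > 0" by (simp add: Q_def)
  have finHs: "finite Hs" and cardHs: "real (card Hs) = Q"
  proof -
    have e: "Hs = {H \<in> carrier_mat r m. \<forall>j<m. (\<lambda>_ _. True) j (colf r H j)}" by (simp add: Hs_def)
    show "finite Hs" unfolding e by (rule card_mat_cols(2))
    have "card Hs = (\<Prod>j<m. card {c\<in>(Vr r :: (nat \<Rightarrow> 'f) set). (\<lambda>_ _. True) j c})"
      unfolding e by (rule card_mat_cols(1))
    also have "\<dots> = (\<Prod>j<m. card (Vr r :: (nat \<Rightarrow> 'f) set))" by simp
    also have "\<dots> = (3 ^ r) ^ m" using card_Vr(2)[where 'f='f, of r] F3 by simp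
    finally show "real (card Hs) = Q" unfolding Q_def by simp
  qed
  have finY: "finite Y" using card_Vr(1) Y_def by simp
  have cardY: "real (card Y) = 3 ^ r - 1"
  proof -
    have "(\<lambda>_. 0) \<in> (Vr r :: (nat \<Rightarrow> 'f) set)" by (simp add: Vr_def)
    then have "card Y = card (Vr r :: (nat \<Rightarrow> 'f) set) - 1" unfolding Y_def
      by (simp add: card_Diff_singleton card_Vr(1))
    moreover have "card (Vr r :: (nat \<Rightarrow> 'f) set) = 3 ^ r" using card_Vr(2)[where 'f='f] F3 by simp
    moreover have "(1::nat) \<le> 3 ^ r" by simp
    ultimately show ?thesis by (simp add: of_nat_diff)
  qed
  have AE: "A E \<subseteq> {..<m} \<and> card (A E) = t" if "E \<in> S" for E
  proof -
    have E: "E \<subseteq> {..<m}" "card E = s" using that S_eq by auto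
    have fE: "finite E" using finite_subset[OF E(1)] by simp
    then have "card ({..<m} - E) = m - s" using E by (simp add: card_Diff_subset)
    then show ?thesis using t_def A_def by auto
  qed
  have Ysub: "y \<in> Vr r \<and> y \<noteq> (\<lambda>_. 0)" if "y \<in> Y" for y using that Y_def by auto
  have q3: "real (card (UNIV::'f set)) ^ r = 3 ^ r" using cF by simp

  have cnt1: "real (card {H\<in>Hs. orth H E y}) = Q * (1/3) ^ t" if "E \<in> S" "y \<in> Y" for E y
  proof -
    have "{H\<in>Hs. orth H E y} = {H \<in> carrier_mat r m. \<forall>j\<in>A E. dotp r y (colf r H j) = 0}"
      by (simp add: Hs_def orth_def)
    then show ?thesis using count1[of y r "A E" m] Ysub[OF that(2)] AE[OF that(1)] cF
      by (simp add: Q_def)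
  qed
  have sumW: "(\<Sum>H\<in>Hs. W H) = Q * \<mu>"
  proof -
    have "(\<Sum>H\<in>Hs. W H) = (\<Sum>E\<in>S. \<Sum>H\<in>Hs. \<Sum>y\<in>Y. ind H E y)" unfolding W_def by (rule sum.swap)
    also have "\<dots> = (\<Sum>E\<in>S. \<Sum>y\<in>Y. \<Sum>H\<in>Hs. ind H E y)"
      by (rule sum.cong[OF refl], rule sum.swap)
    also have "\<dots> = (\<Sum>E\<in>S. \<Sum>y\<in>Y. Q * (1/3) ^ t)"
    proof (rule sum.cong[OF refl], rule sum.cong[OF refl])
      fix E y assume "E \<in> S" "y \<in> Y"
      then show "(\<Sum>H\<in>Hs. ind H E y) = Q * (1/3) ^ t"
        using cnt1 sum_indicator_card[OF finHs] unfolding ind_def by simp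
    qed
    also have "\<dots> = Q * \<mu>" using cardY by (simp add: N_def \<mu>_def)
    finally show ?thesis .
  qed

  define Mult where "Mult = (\<lambda>y::nat\<Rightarrow>'f. (\<lambda>a. \<lambda>l. a * y l) ` (UNIV - {0}))"
  have cardMult: "card (Mult y) \<le> 2" "finite (Mult y)" for y
  proof -
    have "card (Mult y) \<le> card (UNIV - {0::'f})" unfolding Mult_def by (rule card_image_le) simp
    also have "card (UNIV - {0::'f}) = 2" using F3 by (simp add: card_Diff_singleton)
    finally show "card (Mult y) \<le> 2" .
    show "finite (Mult y)" unfolding Mult_def by simp
  qed
  have pair_bound: "real (card {H\<in>Hs. orth H E y \<and> orth H E' y'})
      \<le> Q * (1/3) ^ t * (1/3) ^ t + (if y' \<in> Mult y then Q * (1/3) ^ card (A E \<union> A E') else 0)"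
    if E: "E \<in> S" "E' \<in> S" and y: "y \<in> Y" "y' \<in> Y" for E E' y y'
  proof -
    have eq: "{H\<in>Hs. orth H E y \<and> orth H E' y'} = {H \<in> carrier_mat r m. (\<forall>j\<in>A E. dotp r y (colf r H j) = 0) \<and> (\<forall>j\<in>A E'. dotp r y' (colf r H j) = 0)}"
      by (simp add: Hs_def orth_def)
    show ?thesis
    proof (cases "y' \<in> Mult y")
      case True
      then obtain a where a: "a \<noteq> 0" "y' = (\<lambda>l. a * y l)" unfolding Mult_def by auto
      have "real (card {H\<in>Hs. orth H E y \<and> orth H E' y'}) = Q * (1/3) ^ card (A E \<union> A E')"
        unfolding eq unfolding a(2) using count_dep[of y r a "A E" m "A E'"] Ysub[OF y(1)] a(1) AE[OF E(1)] AE[OF E(2)] cF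
        by (simp add: Q_def)
      then show ?thesis using True Qpos by simp
    next
      case False
      have ind: "\<forall>a. y' \<noteq> (\<lambda>l. a * y l)"
      proof
        fix a show "y' \<noteq> (\<lambda>l. a * y l)"
        proof (cases "a = 0")
          case True then show ?thesis using Ysub[OF y(2)] by simp
        next
          case False then show ?thesis using \<open>y' \<notin> Mult y\<close> unfolding Mult_def by auto
        qed
      qed
      have "real (card {H\<in>Hs. orth H E y \<and> orth H E' y'}) = Q * (1/3) ^ t * (1/3) ^ t"
        unfolding eq using count2[of y r y' "A E" m "A E'"] Ysub[OF y(1)] Ysub[OF y(2)] ind AE[OF E(1)] AE[OF E(2)] cF
        by (simp add: Q_def)
      then show ?thesis using False by simp
    qed
  qed
  have inner: "(\<Sum>y\<in>Y. \<Sum>y'\<in>Y. real (card {H\<in>Hs. orth H E y \<and> orth H E' y'}))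
      \<le> (3 ^ r - 1) ^ 2 * (Q * (1/3) ^ t * (1/3) ^ t) + 2 * (3 ^ r - 1) * (Q * (1/3) ^ card (A E \<union> A E'))"
    if E: "E \<in> S" "E' \<in> S" for E E'
  proof -
    define c where "c = Q * (1/3::real) ^ t * (1/3) ^ t"
    define c' where "c' = Q * (1/3::real) ^ card (A E \<union> A E')"
    have c'0: "c' \<ge> 0" using Qpos by (simp add: c'_def)
    have "(\<Sum>y\<in>Y. \<Sum>y'\<in>Y. real (card {H\<in>Hs. orth H E y \<and> orth H E' y'}))
        \<le> (\<Sum>y\<in>Y. \<Sum>y'\<in>Y. c + (if y' \<in> Mult y then c' else 0))"
      unfolding c_def c'_def by (rule sum_mono, rule sum_mono, rule pair_bound[OF E]; assumption)
    also have "\<dots> \<le> (\<Sum>y\<in>Y. (3 ^ r - 1) * c + 2 * c')"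
    proof (rule sum_mono)
      fix y assume "y \<in> Y"
      have "(\<Sum>y'\<in>Y. (if y' \<in> Mult y then c' else 0)) = c' * (\<Sum>y'\<in>Y. (if y' \<in> Mult y then 1 else 0))"
        unfolding sum_distrib_left by (rule sum.cong) auto
      also have "\<dots> = c' * real (card {y'\<in>Y. y' \<in> Mult y})" using sum_indicator_card[OF finY] by simp
      also have "\<dots> \<le> c' * 2"
      proof (rule mult_left_mono[OF _ c'0])
        have "card {y'\<in>Y. y' \<in> Mult y} \<le> card (Mult y)" by (rule card_mono[OF cardMult(2)]) auto
        then show "real (card {y'\<in>Y. y' \<in> Mult y}) \<le> 2" using cardMult(1)[of y] by linarith
      qed
      finally have "(\<Sum>y'\<in>Y. (if y' \<in> Mult y then c' else 0)) \<le> 2 * c'" by simp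
      moreover have "(\<Sum>y'\<in>Y. c + (if y' \<in> Mult y then c' else 0)) = real (card Y) * c + (\<Sum>y'\<in>Y. (if y' \<in> Mult y then c' else 0))"
        by (simp add: sum.distrib)
      ultimately show "(\<Sum>y'\<in>Y. c + (if y' \<in> Mult y then c' else 0)) \<le> (3 ^ r - 1) * c + 2 * c'"
        unfolding cardY by linarith
    qed
    also have "\<dots> = real (card Y) * ((3 ^ r - 1) * c + 2 * c')" by simp
    also have "\<dots> = (3 ^ r - 1) ^ 2 * c + 2 * (3 ^ r - 1) * c'"
      unfolding cardY by (simp add: power2_eq_square algebra_simps)
    finally show ?thesis by (simp add: c_def c'_def)
  qed
  have sumW2: "(\<Sum>H\<in>Hs. (W H)^2) \<le> Q * (\<mu>^2 + V)"
  proof -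
    have sq: "(W H)^2 = (\<Sum>E\<in>S. \<Sum>E'\<in>S. \<Sum>y\<in>Y. \<Sum>y'\<in>Y. ind H E y * ind H E' y')" for H
      unfolding W_def power2_eq_square sum_product by (rule refl)
    have "(\<Sum>H\<in>Hs. (W H)^2) = (\<Sum>E\<in>S. \<Sum>E'\<in>S. \<Sum>y\<in>Y. \<Sum>y'\<in>Y. \<Sum>H\<in>Hs. ind H E y * ind H E' y')"
      unfolding sq by (rule swap4)
    also have "\<dots> = (\<Sum>E\<in>S. \<Sum>E'\<in>S. \<Sum>y\<in>Y. \<Sum>y'\<in>Y. real (card {H\<in>Hs. orth H E y \<and> orth H E' y'}))"
    proof (intro sum.cong refl)
      fix E E' y y'
      have "(\<Sum>H\<in>Hs. ind H E y * ind H E' y') = (\<Sum>H\<in>Hs. if orth H E y \<and> orth H E' y' then 1 else 0)"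
        by (rule sum.cong) (auto simp: ind_def)
      then show "(\<Sum>H\<in>Hs. ind H E y * ind H E' y') = real (card {H\<in>Hs. orth H E y \<and> orth H E' y'})"
        using sum_indicator_card[OF finHs] by simp
    qed
    also have "\<dots> \<le> (\<Sum>E\<in>S. \<Sum>E'\<in>S. (3 ^ r - 1) ^ 2 * (Q * (1/3) ^ t * (1/3) ^ t) + 2 * (3 ^ r - 1) * (Q * (1/3) ^ card (A E \<union> A E')))"
      by (rule sum_mono, rule sum_mono) (rule inner; simp)
    also have "\<dots> = Q * (\<mu>^2 + V)"
    proof -
      define c1 where "c1 = (3 ^ r - 1) ^ 2 * (Q * (1/3::real) ^ t * (1/3) ^ t)"
      define c2 where "c2 = 2 * (3 ^ r - (1::real))"
      define h where "h = (\<lambda>E E'. (1/3::real) ^ card (A E \<union> A E'))"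
      have "(\<Sum>E\<in>S. \<Sum>E'\<in>S. c1 + c2 * (Q * h E E')) = (\<Sum>E\<in>S. \<Sum>E'\<in>S. c1) + (\<Sum>E\<in>S. \<Sum>E'\<in>S. c2 * (Q * h E E'))"
        by (simp only: sum.distrib)
      also have "(\<Sum>E\<in>S. \<Sum>E'\<in>S. c1) = real N * real N * c1" by (simp add: N_def)
      also have "(\<Sum>E\<in>S. \<Sum>E'\<in>S. c2 * (Q * h E E')) = c2 * Q * (\<Sum>E\<in>S. \<Sum>E'\<in>S. h E E')"
        by (simp add: sum_distrib_left mult.assoc)
      also have "real N * real N * c1 + c2 * Q * (\<Sum>E\<in>S. \<Sum>E'\<in>S. h E E') = Q * (\<mu>^2 + V)"
        unfolding c1_def c2_def \<mu>_def V_def h_def by (simp add: power2_eq_square algebra_simps)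
      finally show ?thesis by (simp only: c1_def c2_def h_def)
    qed
    finally show ?thesis .
  qed
  have var: "(\<Sum>H\<in>Hs. (W H - \<mu>)^2) \<le> Q * V"
  proof -
    have "(\<Sum>H\<in>Hs. (W H - \<mu>)^2) = (\<Sum>H\<in>Hs. (W H)^2 - 2 * \<mu> * W H + \<mu>^2)"
      by (rule sum.cong) (simp_all add: power2_eq_square algebra_simps)
    also have "\<dots> = (\<Sum>H\<in>Hs. (W H)^2) - (\<Sum>H\<in>Hs. 2 * \<mu> * W H) + (\<Sum>H\<in>Hs. \<mu>^2)"
      by (simp only: sum.distrib sum_subtractf)
    also have "(\<Sum>H\<in>Hs. 2 * \<mu> * W H) = 2 * \<mu> * (\<Sum>H\<in>Hs. W H)"
      by (simp only: sum_distrib_left)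
    also have "(\<Sum>H\<in>Hs. \<mu>^2) = real (card Hs) * \<mu>^2" by simp
    finally have ex: "(\<Sum>H\<in>Hs. (W H - \<mu>)^2) = (\<Sum>H\<in>Hs. (W H)^2) - 2 * \<mu> * (\<Sum>H\<in>Hs. W H) + real (card Hs) * \<mu>^2" .
    have e2: "2 * \<mu> * (Q * \<mu>) = 2 * (Q * \<mu>^2)" by (simp add: power2_eq_square)
    have e3: "Q * (\<mu>^2 + V) = Q * \<mu>^2 + Q * V" by (simp add: distrib_left)
    have ex2: "(\<Sum>H\<in>Hs. (W H - \<mu>)^2) = (\<Sum>H\<in>Hs. (W H)^2) - 2 * \<mu> * (Q * \<mu>) + Q * \<mu>^2"
      using ex unfolding sumW cardHs .
    show ?thesis using ex2 sumW2 e2 e3 by linarith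
  qed

  have mu_le: "\<mu> \<le> real N / 3 ^ d"
  proof -
    have "(3::real) ^ r * (1/3) ^ t = (1/3) ^ d"
      unfolding t_eq power_add by (simp add: power_divide)
    have "\<mu> \<le> real N * 3 ^ r * (1/3) ^ t" unfolding \<mu>_def by (intro mult_right_mono mult_left_mono) auto
    also have "\<dots> = real N * ((3::real) ^ r * (1/3) ^ t)" by (simp only: mult.assoc)
    also have "\<dots> = real N / 3 ^ d" unfolding \<open>(3::real) ^ r * (1/3) ^ t = (1/3) ^ d\<close>
      by (simp add: power_one_over)
    finally show ?thesis .
  qed
  obtain a3 :: 'f where a3: "a3 \<noteq> 0" "a3 \<noteq> 1"
  proof -
    have c2: "card {0, 1::'f} = 2" by simp
    have "{0, 1::'f} \<noteq> UNIV"
    proof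
      assume "{0, 1::'f} = UNIV"
      then show False using c2 F3 by simp
    qed
    then show ?thesis using that by blast
  qed
  have gap: "W H - \<mu> > real N / 3 ^ d" if H: "H \<in> bad" for H
  proof -
    have HH: "H \<in> carrier_mat r m" using H bad_def Hs_def by auto
    define G where "G = good_sets H s"
    have G_eq: "G = {E\<in>S. good H E}" using HH by (simp add: G_def good_sets_def S_def)
    have GS: "G \<subseteq> S" using G_eq by auto
    have "1 / 3 ^ d < stat_dist S (unif_mass S) (unif_mass G)" using H by (simp add: bad_def G_def)
    also have "\<dots> \<le> real (card (S - G)) / real N" using dist_le[OF finS GS Sne] N_def by simp
    finally have cSG: "real N / 3 ^ d < real (card (S - G))" using Npos by (simp add: field_simps)
    have two: "2 \<le> (\<Sum>y\<in>Y. ind H E y)" if E: "E \<in> S - G" for E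
    proof -
      have ng: "\<not> good H E" using E G_eq by auto
      have Em: "E \<subseteq> {0..<m}" using E S_def subsets_of_size_def by auto
      obtain y0 where y0: "y0 \<in> Vr r" "y0 \<noteq> (\<lambda>_. 0)" "\<forall>j\<in>{0..<m} - E. dotp r y0 (colf r H j) = 0"
        using not_good_perp[OF HH Em ng] by blast
      obtain i where i: "i < r" "y0 i \<noteq> 0" using nonzero_idx[OF y0(1,2)] .
      define y1 where "y1 = (\<lambda>l. a3 * y0 l)"
      have o0: "orth H E y0" using y0(3) by (simp add: orth_def A_def atLeast0LessThan)
      have o1: "orth H E y1" using o0 by (simp add: orth_def y1_def dotp_scal1)
      have y1V: "y1 \<in> Vr r" using y0(1) by (simp add: Vr_def y1_def)
      have y1ne: "y1 \<noteq> (\<lambda>_. 0)" using i a3 by (metis mult_eq_0_iff y1_def)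
      have y01: "y0 \<noteq> y1"
      proof
        assume "y0 = y1"
        then have "y0 i = a3 * y0 i" by (metis y1_def)
        then show False using i a3 by simp
      qed
      have sub: "{y0, y1} \<subseteq> Y" using y0 y1V y1ne Y_def by auto
      have s2: "(\<Sum>y\<in>{y0, y1}. ind H E y) = 2" using o0 o1 y01 by (simp add: ind_def)
      have "(\<Sum>y\<in>{y0, y1}. ind H E y) \<le> (\<Sum>y\<in>Y. ind H E y)"
        by (rule sum_mono2[OF finY sub]) (simp add: ind_def)
      then show ?thesis using s2 by simp
    qed
    have "2 * real (card (S - G)) = (\<Sum>E\<in>S - G. 2)" by simp
    also have "\<dots> \<le> (\<Sum>E\<in>S - G. \<Sum>y\<in>Y. ind H E y)" by (rule sum_mono) (rule two)
    also have "\<dots> \<le> W H" unfolding W_def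
      by (rule sum_mono2[OF finS]) (auto intro: sum_nonneg simp: ind_def)
    finally have "2 * real (card (S - G)) \<le> W H" .
    then show ?thesis using cSG mu_le by linarith
  qed
  define a where "a = real N / 3 ^ d"
  have apos: "a > 0" using Npos by (simp add: a_def)
  have cheb: "real (card bad) * a^2 \<le> Q * V"
  proof -
    have badHs: "bad \<subseteq> Hs" by (auto simp: bad_def)
    have finbad: "finite bad" using finite_subset[OF badHs finHs] .
    have "real (card bad) * a^2 = (\<Sum>H\<in>bad. a^2)" by simp
    also have "\<dots> \<le> (\<Sum>H\<in>bad. (W H - \<mu>)^2)"
    proof (rule sum_mono)
      fix H assume "H \<in> bad"
      then have "a < W H - \<mu>" using gap a_def by simp
      then show "a^2 \<le> (W H - \<mu>)^2" using apos by (simp add: power_mono)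
    qed
    also have "\<dots> \<le> (\<Sum>H\<in>Hs. (W H - \<mu>)^2)" by (rule sum_mono2[OF finHs badHs]) simp
    also have "\<dots> \<le> Q * V" by (rule var)
    finally show ?thesis .
  qed
  have prob: "real (card bad) / Q \<le> V / a^2"
    using cheb Qpos apos by (simp add: field_simps)

  define g where "g = (\<lambda>x::real. (1 + 3 * x) ^ t * (1 + x) ^ s / x ^ t)"
  have inner2: "(\<Sum>E'\<in>S. (1/3::real) ^ card (A E \<union> A E')) \<le> (1/3) ^ (2 * t) * g x"
    if E: "E \<in> S" and x: "x > 0" for E x
  proof -
    have e1: "(1/3::real) ^ card (A E \<union> A E') = (1/3) ^ (2 * t) * 3 ^ card (A E \<inter> A E')" if "E' \<in> S" for E'
    proof -
      have "card (A E) + card (A E') = card (A E \<union> A E') + card (A E \<inter> A E')"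
        using card_Un_Int[of "A E" "A E'"] by (simp add: A_def)
      then have ct: "card (A E \<union> A E') + card (A E \<inter> A E') = 2 * t"
        using AE[OF E] AE[OF that] by simp
      have "(1/3::real) ^ (2 * t) = (1/3) ^ card (A E \<union> A E') * (1/3) ^ card (A E \<inter> A E')"
        by (simp add: ct[symmetric] power_add)
      then have "(1/3::real) ^ (2 * t) * 3 ^ card (A E \<inter> A E') = (1/3) ^ card (A E \<union> A E') * ((1/3) ^ card (A E \<inter> A E') * 3 ^ card (A E \<inter> A E'))"
        by (simp add: mult.assoc)
      also have "(1/3::real) ^ card (A E \<inter> A E') * 3 ^ card (A E \<inter> A E') = 1"
        by (simp add: power_mult_distrib[symmetric])
      finally show ?thesis by simp
    qed
    have e2: "(\<Sum>E'\<in>S. 3 ^ card (A E \<inter> A E') * x ^ t) = (\<Sum>B\<in>{B. B \<subseteq> {..<m} \<and> card B = s}. 3 ^ card (A E \<inter> ({..<m} - B)) * x ^ card ({..<m} - B))"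
      unfolding S_eq
    proof (rule sum.cong[OF refl])
      fix B assume "B \<in> {B. B \<subseteq> {..<m} \<and> card B = s}"
      then have "B \<in> S" using S_eq by simp
      then show "3 ^ card (A E \<inter> A B) * x ^ t = 3 ^ card (A E \<inter> ({..<m} - B)) * x ^ card ({..<m} - B)"
        using AE[of B] by (simp add: A_def)
    qed
    have AEm: "{..<m} - A E = E" using E S_eq A_def by auto
    have cE: "card E = s" using E S_eq by simp
    have gb: "(\<Sum>B\<in>{B. B \<subseteq> {..<m} \<and> card B = s}. 3 ^ card (A E \<inter> ({..<m} - B)) * x ^ card ({..<m} - B))
        \<le> (1 + 3 * x) ^ card (A E) * (1 + x) ^ card ({..<m} - A E)"
      by (rule gen_bound) (use AE[OF E] x in auto)
    have "(\<Sum>E'\<in>S. 3 ^ card (A E \<inter> A E') * x ^ t) \<le> (1 + 3 * x) ^ t * (1 + x) ^ s"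
      unfolding e2 using gb AE[OF E] AEm cE by simp
    then have "(\<Sum>E'\<in>S. (3::real) ^ card (A E \<inter> A E')) * x ^ t \<le> (1 + 3 * x) ^ t * (1 + x) ^ s"
      by (simp add: sum_distrib_right)
    then have "(\<Sum>E'\<in>S. (3::real) ^ card (A E \<inter> A E')) \<le> g x"
      using x by (simp add: g_def field_simps)
    then have "(1/3) ^ (2 * t) * (\<Sum>E'\<in>S. (3::real) ^ card (A E \<inter> A E')) \<le> (1/3) ^ (2 * t) * g x"
      by (simp add: mult_left_mono)
    moreover have "(\<Sum>E'\<in>S. (1/3::real) ^ card (A E \<union> A E')) = (1/3) ^ (2 * t) * (\<Sum>E'\<in>S. (3::real) ^ card (A E \<inter> A E'))"
      using e1 by (simp add: sum_distrib_left)
    ultimately show ?thesis by simp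
  qed
  have Vb: "V \<le> 2 * 3 ^ r * real N * (1/3) ^ (2 * t) * g x" if x: "x > 0" for x
  proof -
    have gx: "g x \<ge> 0" using x by (simp add: g_def)
    have "(\<Sum>E\<in>S. \<Sum>E'\<in>S. (1/3::real) ^ card (A E \<union> A E')) \<le> (\<Sum>E\<in>S. (1/3) ^ (2 * t) * g x)"
      by (rule sum_mono) (rule inner2[OF _ x])
    also have "\<dots> = real N * (1/3) ^ (2 * t) * g x" by (simp add: N_def)
    finally have s1: "(\<Sum>E\<in>S. \<Sum>E'\<in>S. (1/3::real) ^ card (A E \<union> A E')) \<le> real N * (1/3) ^ (2 * t) * g x" .
    have "V \<le> 2 * (3 ^ r - 1) * (real N * (1/3) ^ (2 * t) * g x)"
      unfolding V_def by (rule mult_left_mono[OF s1]) (simp add: one_le_power)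
    also have "\<dots> \<le> 2 * 3 ^ r * (real N * (1/3) ^ (2 * t) * g x)"
      by (rule mult_right_mono) (use gx in simp_all)
    finally show ?thesis by (simp add: mult.assoc)
  qed
  have key: "real (card bad) / Q \<le> 2 * g x * (1/3) ^ r / real N" if x: "x > 0" for x
  proof -
    have "real (card bad) / Q \<le> V / a^2" by (rule prob)
    also have "\<dots> \<le> 2 * 3 ^ r * real N * (1/3) ^ (2 * t) * g x / a^2"
      by (rule divide_right_mono[OF Vb[OF x]]) simp
    also have "\<dots> = 2 * g x * (1/3) ^ r / real N"
    proof -
      have tt: "2 * t = r + r + d + d" using t_eq by simp
      have p3: "(3::real) ^ (2 * t) = 3 ^ r * 3 ^ r * (3 ^ d) ^ 2"
        unfolding tt by (simp add: power_add power2_eq_square)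
      have idn: "(3::real) ^ r * (1/3) ^ (2 * t) * (3 ^ d) ^ 2 = (1/3) ^ r"
        unfolding power_one_over p3 by (simp add: field_simps)
      have "2 * 3 ^ r * real N * (1/3) ^ (2 * t) * g x / a^2
          = 2 * g x * ((3::real) ^ r * (1/3) ^ (2 * t) * (3 ^ d) ^ 2) / real N"
        using alg1[of N "3 ^ d" "3 ^ r" "(1/3) ^ (2 * t)" "g x"] Npos unfolding a_def by simp
      then show ?thesis unfolding idn .
    qed
    finally show ?thesis .
  qed

  define R where "R = real k / real m"
  define \<delta> where "\<delta> = real d / real m"
  define F where "F = (\<lambda>x. (1 - R + \<delta>) * log 3 ((1 + 3*x) / x) + (R - \<delta>) * log 3 (1 + x))"
  define I where "I = (INF x\<in>{0<..}. F x)"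
  have gam: "gamma_exp R \<delta> = I - 1 + R" by (simp add: gamma_exp_def I_def F_def)
  obtain x where x: "x > 0" "F x < I + 1 / real m"
  proof -
    have "(1::real) \<in> {0<..}" by simp
    then have ne: "F ` {0<..} \<noteq> {}" by blast
    have lt: "Inf (F ` {0<..}) < I + 1 / real m" using m0 by (simp add: I_def)
    obtain z where z: "z \<in> F ` {0<..}" "z < I + 1 / real m" using cInf_lessD[OF ne lt] by blast
    then obtain x0 where x0: "x0 \<in> {0<..}" "z = F x0" by blast
    show ?thesis using that[of x0] x0 z by simp
  qed
  have rr: "real r = real m - real k" using km by (simp add: r_def of_nat_diff)
  have rt: "real t = real r + real d" using t_eq by simp
  have rs: "real s = real k - real d" using d_range by (simp add: s_def of_nat_diff)
  have mt: "real m * (1 - R + \<delta>) = real t" "real m * (R - \<delta>) = real s"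
    using m0 by (simp_all add: R_def \<delta>_def rt rr rs field_simps)
  have gF: "g x = 3 powr (real m * F x)"
  proof -
    have "real m * F x = (real m * (1 - R + \<delta>)) * log 3 ((1 + 3*x) / x) + (real m * (R - \<delta>)) * log 3 (1 + x)"
      unfolding F_def by (simp add: algebra_simps)
    also have "\<dots> = real t * log 3 ((1 + 3*x) / x) + real s * log 3 (1 + x)"
      using mt by simp
    finally have "real m * F x = real t * log 3 ((1 + 3*x) / x) + real s * log 3 (1 + x)" .
    then have "3 powr (real m * F x) = ((1 + 3*x) / x) ^ t * (1 + x) ^ s"
      using x(1) by (simp add: powr_add powr_tlog)
    then show ?thesis by (simp add: g_def power_divide)
  qed
  have gr: "g x * (1/3) ^ r < 3 * 3 powr (real m * gamma_exp R \<delta>)"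
  proof -
    have "g x * (1/3) ^ r = 3 powr (real m * F x - real r)"
      by (simp add: gF powr_diff powr_realpow power_one_over)
    also have "\<dots> < 3 powr (real m * gamma_exp R \<delta> + 1)"
    proof (rule powr_less_mono)
      have "real m * F x < real m * I + 1" using x(2) m0 by (simp add: field_simps)
      moreover have "real m * gamma_exp R \<delta> = real m * I - real r"
        unfolding gam using m0 by (simp add: R_def rr field_simps)
      ultimately show "real m * F x - real r < real m * gamma_exp R \<delta> + 1" by linarith
    qed simp
    also have "\<dots> = 3 * 3 powr (real m * gamma_exp R \<delta>)" by (simp add: powr_add)
    finally show ?thesis .
  qed
  have nn: "real n = 2 * real m"
  proof -
    have "n = 2 * m" using even_n m_def by simp
    then show ?thesis by simp
  qed
  have final: "real (card bad) / real (card Hs)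
      \<le> 2 / real (m choose s) * (3 ^ d + 2 * 3 powr (2 * real d + gamma_exp R \<delta> * real n / 2))"
  proof -
    define P where "P = 3 powr (real m * gamma_exp R \<delta>)"
    have P0: "P \<ge> 0" by (simp add: P_def)
    have d0: "(0::real) \<le> 3 ^ d" by simp
    have h9: "9 * P \<le> 3 powr (2 * real d + gamma_exp R \<delta> * real n / 2)"
    proof -
      have "3 powr (2 * real d + gamma_exp R \<delta> * real n / 2) = 3 powr (2 * real d) * P"
        by (simp add: P_def powr_add nn mult.commute)
      moreover have "(9::real) \<le> 3 powr (2 * real d)"
      proof -
        have "(3::real) powr 2 \<le> 3 powr (2 * real d)" using d_range by (intro powr_mono) auto
        then show ?thesis by simp
      qed
      ultimately show ?thesis using P0 by (simp add: mult_right_mono)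
    qed
    have "real (card bad) / real (card Hs) \<le> 2 * g x * (1/3) ^ r / real N"
      using key[OF x(1)] cardHs by simp
    also have "\<dots> \<le> 2 * (3 * P) / real N"
    proof (rule divide_right_mono)
      show "2 * g x * (1/3) ^ r \<le> 2 * (3 * P)" using less_imp_le[OF gr] by (simp add: P_def mult.assoc)
    qed simp
    also have "\<dots> \<le> 2 * (3 ^ d + 2 * 3 powr (2 * real d + gamma_exp R \<delta> * real n / 2)) / real N"
    proof (rule divide_right_mono)
      show "2 * (3 * P) \<le> 2 * (3 ^ d + 2 * 3 powr (2 * real d + gamma_exp R \<delta> * real n / 2))"
      proof -
        define X where "X = 3 powr (2 * real d + gamma_exp R \<delta> * real n / 2)"
        have "9 * P \<le> X" using h9 unfolding X_def .
        then have "3 * P \<le> 3 ^ d + 2 * X" using P0 d0 by linarith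
        then show ?thesis unfolding X_def by simp
      qed
    qed simp
    also have "\<dots> = 2 / real (m choose s) * (3 ^ d + 2 * 3 powr (2 * real d + gamma_exp R \<delta> * real n / 2))"
      using N_eq by simp
    finally show ?thesis .
  qed
  show ?thesis
    using final by (simp only: Let_def bad_def Hs_def S_def R_def \<delta>_def m_def r_def s_def)
qed

end
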